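(* Let $\Sigma\subseteq\widehat{\Sigma}$ be alphabets with $\Pi=\widehat{\Sigma}\setminus\Sigma$ finite, and let $R\subseteq\Sigma^*\times\Sigma^*$. If $D$ is a family of $\widehat{\Sigma}$-defining relations for $\Pi$ whose derived generator graph $\Gamma_D(D)$ is acyclic, then there exists a sequence of exactly $|\Pi|$ $\mathbf{Gen}(+)$ transformations between $\langle\Sigma\mid R\rangle$ and $\langle\widehat{\Sigma}\mid R\cup D\rangle$.
   Context: For an alphabet $\Sigma$, $\Sigma^*$ is the free monoid of words over $\Sigma$. For $R\subseteq\Sigma^*\times\Sigma^*$ (elements written $q\approx r$), the presentation $\langle\Sigma\mid R\rangle$ denotes the quotient of $\Sigma^*$ by the smallest congruence containing $R$. A $\mathbf{Gen}(+)$ transformation passes from a presentation $\langle\Sigma\mid R\rangle$ to $\langle\Sigma\cup\{x\}\mid R\cup\{x\approx w\}\rangle$ where $x\notin\Sigma$ is a new symbol and $w\in\Sigma^*$; a sequence of such transformations between two presentations is a chain of presentations starting at the first and ending at the second, each obtained from the previous one by one such transformation. A $\Sigma$-defining relation for $x\in\Sigma$ is a relation $x\approx w$ with $w\in\Sigma^*$; a family of $\Sigma$-defining relations for $\Pi\subseteq\Sigma$ is a set $\{r_x\mid x\in\Pi\}$ where each $r_x$ is a $\Sigma$-defining relation for $x$. The derived generator graph $\Gamma_D(D)$ of such a family $D$ is the directed graph with vertex set $\Pi$ and an edge $(x,y)$ whenever $y$ occurs in the right-hand side $w$ of the relation $x\approx w$ in $D$. A directed graph is acyclic if it has no directed path of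 positive length from a vertex to itself. *)

theory Defs
  imports Main
begin

text \<open>Words over an alphabet are lists; a relation q \<approx> r is a pair (q, r).
A presentation is a pair (alphabet, set of relations).\<close>

type_synonym 'a presentation = "'a set \<times> ('a list \<times> 'a list) set"

definition gen_plus :: "'a presentation \<Rightarrow> 'a presentation \<Rightarrow> bool" where
  "gen_plus P Q \<longleftrightarrow> (\<exists>x w. x \<notin> fst P \<and> w \<in> lists (fst P) \<and>
      Q = (insert x (fst P), insert ([x], w) (snd P)))"

definition gen_plus_seq :: "nat \<Rightarrow> 'a presentation \<Rightarrow> 'a presentation \<Rightarrow> bool" where
  "gen_plus_seq n P Q \<longleftrightarrow> (\<exists>ps. length ps = Suc n \<and> hd ps = P \<and> last ps = Q \<and>
      (\<forall>i < n. gen_plus (ps ! i) (ps ! Suc i)))"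

definition defining_rel :: "'a set \<Rightarrow> 'a \<Rightarrow> 'a list \<times> 'a list \<Rightarrow> bool" where
  "defining_rel \<Sigma> x r \<longleftrightarrow> (\<exists>w. r = ([x], w) \<and> w \<in> lists \<Sigma>)"

definition defining_family :: "'a set \<Rightarrow> 'a set \<Rightarrow> ('a list \<times> 'a list) set \<Rightarrow> bool" where
  "defining_family \<Sigma> \<Pi> D \<longleftrightarrow> (\<exists>r. D = r ` \<Pi> \<and> (\<forall>x\<in>\<Pi>. defining_rel \<Sigma> x (r x)))"

definition derived_graph :: "'a set \<Rightarrow> ('a list \<times> 'a list) set \<Rightarrow> ('a \<times> 'a) set" where
  "derived_graph \<Pi> D = {(x, y). x \<in> \<Pi> \<and> y \<in> \<Pi> \<and> (\<exists>w. ([x], w) \<in> D \<and> y \<in> set w)}"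

end

theory Submission
  imports Defs
begin

lemma seq0: "gen_plus_seq 0 P P"
  unfolding gen_plus_seq_def by (rule exI[of _ "[P]"]) simp

lemma seq_snoc:
  assumes "gen_plus_seq n P Q" "gen_plus Q Q'"
  shows "gen_plus_seq (Suc n) P Q'"
proof -
  obtain ps where ps: "length ps = Suc n" "hd ps = P" "last ps = Q"
    "\<forall>i < n. gen_plus (ps ! i) (ps ! Suc i)"
    using assms(1) unfolding gen_plus_seq_def by blast
  have ne: "ps \<noteq> []" using ps(1) by auto
  have lastn: "ps ! n = Q" using ps(1,3) ne by (simp add: last_conv_nth)
  show ?thesis unfolding gen_plus_seq_def
  proof (rule exI[of _ "ps @ [Q']"], intro conjI allI impI)
    show "length (ps @ [Q']) = Suc (Suc n)" using ps by simp
    show "hd (ps @ [Q']) = P" using ps ne by simp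
    show "last (ps @ [Q']) = Q'" by simp
    fix i assume i: "i < Suc n"
    show "gen_plus ((ps @ [Q']) ! i) ((ps @ [Q']) ! Suc i)"
    proof (cases "i < n")
      case True
      then show ?thesis using ps(1,4) by (simp add: nth_append)
    next
      case False
      then have "i = n" using i by simp
      then show ?thesis using ps(1) lastn assms(2) by (simp add: nth_append)
    qed
  qed
qed

theorem theorem7:
  fixes \<Sigma> \<Sigma>h :: "'a set" and R D :: "('a list \<times> 'a list) set"
  assumes "\<Sigma> \<subseteq> \<Sigma>h"
    and "finite (\<Sigma>h - \<Sigma>)"
    and "R \<subseteq> lists \<Sigma> \<times> lists \<Sigma>"
    and "defining_family \<Sigma>h (\<Sigma>h - \<Sigma>) D"
    and "acyclic (derived_graph (\<Sigma>h - \<Sigma>) D)"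
  shows "gen_plus_seq (card (\<Sigma>h - \<Sigma>)) (\<Sigma>, R) (\<Sigma>h, R \<union> D)"
proof -
  define P where "P = \<Sigma>h - \<Sigma>"
  define G where "G = derived_graph P D"
  obtain r where D: "D = r ` P" and rr: "\<forall>x\<in>P. defining_rel \<Sigma>h x (r x)"
    using assms(4) unfolding defining_family_def P_def by blast
  have finP: "finite P" using assms(2) unfolding P_def .
  have finG: "finite G" 
  proof -
    have "G \<subseteq> P \<times> P" unfolding G_def derived_graph_def by auto
    moreover have "finite (P \<times> P)" using finP by simp
    ultimately show ?thesis by (rule finite_subset)
  qed
  have wfG: "wf G" using finG assms(5) finite_acyclic_wf unfolding G_def P_def by blast
  have irr: "(x, x) \<notin> G" for x using assms(5) unfolding G_def P_def acyclic_def
    by (meson r_into_trancl')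
  have main: "\<And>A. A \<subseteq> P \<Longrightarrow> (\<forall>x y. x \<in> A \<and> (x, y) \<in> G \<longrightarrow> y \<in> A) \<Longrightarrow>
     card A = n \<Longrightarrow> gen_plus_seq n (\<Sigma>, R) (\<Sigma> \<union> A, R \<union> r ` A)" for n
  proof (induction n)
    case 0
    have "finite A" using 0(1) finP by (rule finite_subset)
    then have "A = {}" using 0 by simp
    then show ?case using seq0 by simp
  next
    case (Suc n)
    have finA: "finite A" using Suc.prems(1) finP by (rule finite_subset)
    have "A \<noteq> {}" using Suc.prems(3) by auto
    then obtain x where xA: "x \<in> A" and xmin: "\<And>y. (y, x) \<in> G \<Longrightarrow> y \<notin> A"
      using wfE_min[OF wfG] by blast
    define B where "B = A - {x}"
    have IH: "gen_plus_seq n (\<Sigma>, R) (\<Sigma> \<union> B, R \<union> r ` B)"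
    proof (rule Suc.IH)
      show "B \<subseteq> P" using Suc.prems(1) B_def by auto
      show "\<forall>z y. z \<in> B \<and> (z, y) \<in> G \<longrightarrow> y \<in> B"
        using Suc.prems(2) xmin B_def by blast
      show "card B = n" using Suc.prems(3) finA xA B_def by simp
    qed
    have xP: "x \<in> P" using xA Suc.prems(1) by auto
    obtain w where rx: "r x = ([x], w)" and wS: "w \<in> lists \<Sigma>h"
      using rr xP unfolding defining_rel_def by blast
    have xnot: "x \<notin> \<Sigma> \<union> B" using xP P_def B_def by auto
    have wB: "w \<in> lists (\<Sigma> \<union> B)"
    unfolding in_lists_conv_set proof (intro ballI)
      fix y assume y: "y \<in> set w"
      show "y \<in> \<Sigma> \<union> B"
      proof (cases "y \<in> \<Sigma>")
        case True
        then show ?thesis by simp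
      next
        case False
        then have yP: "y \<in> P" using y wS P_def by auto
        have "([x], w) \<in> D" using D xP rx by (metis imageI)
        then have "(x, y) \<in> G" using xP yP y unfolding G_def derived_graph_def by blast
        then have "y \<in> A" "y \<noteq> x" using Suc.prems(2) xA irr by auto
        then show ?thesis using B_def by auto
      qed
    qed
    have step: "gen_plus (\<Sigma> \<union> B, R \<union> r ` B) (\<Sigma> \<union> A, R \<union> r ` A)"
      unfolding gen_plus_def
    proof (rule exI[of _ x], rule exI[of _ w], intro conjI)
      show "x \<notin> fst (\<Sigma> \<union> B, R \<union> r ` B)" using xnot by simp
      show "w \<in> lists (fst (\<Sigma> \<union> B, R \<union> r ` B))" using wB by simp
      have "insert x (\<Sigma> \<union> B) = \<Sigma> \<union> A" using xA B_def by auto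
      moreover have "insert ([x], w) (R \<union> r ` B) = R \<union> r ` A"
        using xA B_def rx by (metis Diff_insert_absorb Un_insert_right image_insert insert_Diff1 insert_Diff_single mk_disjoint_insert singletonI)
      ultimately show "(\<Sigma> \<union> A, R \<union> r ` A) =
        (insert x (fst (\<Sigma> \<union> B, R \<union> r ` B)), insert ([x], w) (snd (\<Sigma> \<union> B, R \<union> r ` B)))"
        by simp
    qed
    show ?case by (rule seq_snoc[OF IH step])
  qed
  have "gen_plus_seq (card P) (\<Sigma>, R) (\<Sigma> \<union> P, R \<union> r ` P)"
    by (rule main) (auto simp: G_def derived_graph_def)
  moreover have "\<Sigma> \<union> P = \<Sigma>h" using assms(1) P_def by auto
  ultimately show ?thesis using D P_def by simp
qed

end
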